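(* Let $(H,m_H,\delta,\epsilon)$ be a commutative bialgebra with unit $1_H$, let $q\in\{\theta,\mathrm r,\ell\}$ ($\theta\in\mathbb{K}$), and consider the free commutative $\mathbf R_q$-algebra $(T^+(H),\bar\bullet^q,P_H)$ with $i_H(h)=h\otimes1_{\mathbb{K}}$. Let $\Delta:T^+(H)\to T^+(H)^{\otimes2}$ be the unique $\mathbf R_q$-algebra morphism (target equipped with the operator $P_H\otimes\mathrm{id}$) with $\Delta(i_H(h))=\sum i_H(h_{(1)})\otimes i_H(h_{(2)})$, and let $\tilde\epsilon:T^+(H)\to\mathbb{K}$ be the unique $\mathbf R_q$-algebra morphism with $\tilde\epsilon\circ i_H=\epsilon$, where $\mathbb{K}$ carries the operator $-\theta\,\mathrm{id}_{\mathbb{K}}$ if $q=\theta$ and $\mathrm{id}_{\mathbb{K}}$ if $q\in\{\mathrm r,\ell\}$. Then $\Delta$ is coassociative and $(\mathrm{id}\otimes\tilde\epsilon)\Delta=\mathrm{id}_{T^+(H)}$; hence $(T^+(H),\bar\bullet^q,P_H,\Delta,\tilde\epsilon)$ is a right $\mathbf R_q$-bialgebra.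
   Context: $\mathbb{K}$ is a field of characteristic $0$; $\delta(h)=\sum h_{(1)}\otimes h_{(2)}$ (Sweedler notation). For a unital commutative algebra $A$ with product $[a;b]$: $T(A)=\bigoplus_{n\ge0}A^{\otimes n}$, $A^{\otimes0}=\mathbb{K}1_{\mathbb{K}}$, $a\otimes1_{\mathbb{K}}$ identified with $a$; for $q\in\{\theta,\mathrm r,\ell\}$, $\bullet^q$ is bilinear with $k1_{\mathbb{K}}\bullet^qU=kU=U\bullet^qk1_{\mathbb{K}}$ and $(a\otimes U)\bullet^q(b\otimes V)=a\otimes(U\bullet^q(b\otimes V))+b\otimes((a\otimes U)\bullet^qV)+M_q$ with $M_\theta=\theta[a;b]\otimes(U\bullet^\theta V)$, $M_{\mathrm r}=-1_A\otimes[a;b]\otimes(U\bullet^{\mathrm r}V)$, $M_\ell=-[a;b]\otimes1_A\otimes(U\bullet^\ell V)$. $T^+(A)=A\otimes T(A)$ with $(a\otimes U)\bar\bullet^q(b\otimes V)=[a;b]\otimes(U\bullet^qV)$, unit $1_A\otimes1_{\mathbb{K}}$, and $P_A(a_1\otimes\cdots\otimes a_n)=1_A\otimes a_1\otimes\cdots\otimes a_n$. $\mathbf R_\theta$-algebras are Rota--Baxter algebras of scalar weight $\theta$ ($P(x)P(y)=P(P(x)y+xP(y))+\theta P(xy)$), $\mathbf R_{\mathrm r}$-algebras are Nijenhuis algebras ($P(x)P(y)=P(P(x)y+xP(y))-P^2(xy)$), $\mathbf R_\ell$-algebras are $TD$-algebras ($P(x)P(y)=P(P(x)y+xP(y))-P(xP(1)y)$);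 morphisms are unital algebra homomorphisms intertwining the operators. Known fact used as background: $(T^+(A),\bar\bullet^q,P_A)$ with $i_A$ is the free unital commutative $\mathbf R_q$-algebra over $A$. If $(B,P)$ is an $\mathbf R_q$-algebra then $B^{\otimes n}$ with componentwise product and operator $P\otimes\mathrm{id}_B^{\otimes(n-1)}$ is an $\mathbf R_q$-algebra. A right $\mathbf R_q$-bialgebra is an $\mathbf R_q$-algebra $(B,P)$ with a coassociative coproduct $\Delta:B\to B\otimes B$ and a right counit $\epsilon:B\to\mathbb{K}$ (i.e. $(\mathrm{id}_B\otimes\epsilon)\Delta=\mathrm{id}_B$), both being $\mathbf R_q$-algebra morphisms (with $B\otimes B$ carrying $P\otimes\mathrm{id}$ and $\mathbb{K}$ carrying $-\theta\,\mathrm{id}$ resp. $\mathrm{id}$). *)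

theory Defs
  imports "HOL-Library.Poly_Mapping"
begin

(* Vector spaces over the field 'k are represented by a chosen basis:
  a vector with basis 'a is a finitely supported function  'a \<Rightarrow>\<^sub>0 'k.
  Linear maps are given by their values on basis elements, so they are
  linear by construction. The tensor product of spaces with bases 'a and 'c
  has basis 'a \<times> 'c. *)

definition smul :: "'k::field \<Rightarrow> ('a \<Rightarrow>\<^sub>0 'k) \<Rightarrow> ('a \<Rightarrow>\<^sub>0 'k)" where
  "smul c p = Poly_Mapping.map (\<lambda>v. c * v) p"

definition vec :: "'a \<Rightarrow> ('a \<Rightarrow>\<^sub>0 'k::field)" where
  "vec a = Poly_Mapping.single a 1"

definition lin :: "('a \<Rightarrow> ('c \<Rightarrow>\<^sub>0 'k::field)) \<Rightarrow> ('a \<Rightarrow>\<^sub>0 'k) \<Rightarrow> ('c \<Rightarrow>\<^sub>0 'k)" where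
  "lin f x = (\<Sum>a\<in>Poly_Mapping.keys x. smul (Poly_Mapping.lookup x a) (f a))"

definition linK :: "('a \<Rightarrow> 'k::field) \<Rightarrow> ('a \<Rightarrow>\<^sub>0 'k) \<Rightarrow> 'k" where
  "linK f x = (\<Sum>a\<in>Poly_Mapping.keys x. Poly_Mapping.lookup x a * f a)"

definition tens :: "('a \<Rightarrow>\<^sub>0 'k::field) \<Rightarrow> ('c \<Rightarrow>\<^sub>0 'k) \<Rightarrow> ('a \<times> 'c \<Rightarrow>\<^sub>0 'k)" where
  "tens x y = lin (\<lambda>a. lin (\<lambda>c. vec (a, c)) y) x"

definition tensmap :: "('a \<Rightarrow> ('c \<Rightarrow>\<^sub>0 'k::field)) \<Rightarrow> ('b \<Rightarrow> ('d \<Rightarrow>\<^sub>0 'k))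
    \<Rightarrow> 'a \<times> 'b \<Rightarrow> ('c \<times> 'd \<Rightarrow>\<^sub>0 'k)" where
  "tensmap f g = (\<lambda>(a, b). tens (f a) (g b))"

definition mulv :: "('a \<Rightarrow> 'a \<Rightarrow> ('a \<Rightarrow>\<^sub>0 'k::field)) \<Rightarrow> ('a \<Rightarrow>\<^sub>0 'k) \<Rightarrow> ('a \<Rightarrow>\<^sub>0 'k) \<Rightarrow> ('a \<Rightarrow>\<^sub>0 'k)" where
  "mulv m x y = lin (\<lambda>a. lin (\<lambda>b. m a b) y) x"

definition tensmul :: "('a \<Rightarrow> 'a \<Rightarrow> ('a \<Rightarrow>\<^sub>0 'k::field)) \<Rightarrow> 'a \<times> 'a \<Rightarrow> 'a \<times> 'a \<Rightarrow> ('a \<times> 'a \<Rightarrow>\<^sub>0 'k)" where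
  "tensmul m = (\<lambda>(a1, a2) (b1, b2). tens (m a1 b1) (m a2 b2))"

definition tensop :: "('a \<Rightarrow> ('a \<Rightarrow>\<^sub>0 'k::field)) \<Rightarrow> 'a \<times> 'a \<Rightarrow> ('a \<times> 'a \<Rightarrow>\<^sub>0 'k)" where
  "tensop P = (\<lambda>(a, b). tens (P a) (vec b))"

(* The three cases q = theta (Rota--Baxter of weight theta), q = r (Nijenhuis), q = l (TD). *)
datatype 'k rbq = RB 'k | Nij | TD

definition rq_identity :: "'k::field rbq \<Rightarrow> ('a \<Rightarrow> 'a \<Rightarrow> ('a \<Rightarrow>\<^sub>0 'k)) \<Rightarrow> ('a \<Rightarrow>\<^sub>0 'k)
    \<Rightarrow> ('a \<Rightarrow> ('a \<Rightarrow>\<^sub>0 'k)) \<Rightarrow> bool" where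
  "rq_identity q m u P \<longleftrightarrow> (\<forall>x y.
     mulv m (lin P x) (lin P y) =
       lin P (mulv m (lin P x) y + mulv m x (lin P y)) +
       (case q of
          RB \<theta> \<Rightarrow> smul \<theta> (lin P (mulv m x y))
        | Nij \<Rightarrow> - lin P (lin P (mulv m x y))
        | TD \<Rightarrow> - lin P (mulv m (mulv m x (lin P u)) y)))"

definition is_Rq_algebra :: "'k::field rbq \<Rightarrow> ('a \<Rightarrow> 'a \<Rightarrow> ('a \<Rightarrow>\<^sub>0 'k)) \<Rightarrow> ('a \<Rightarrow>\<^sub>0 'k)
    \<Rightarrow> ('a \<Rightarrow> ('a \<Rightarrow>\<^sub>0 'k)) \<Rightarrow> bool" where
  "is_Rq_algebra q m u P \<longleftrightarrow>
     (\<forall>x y z. mulv m (mulv m x y) z = mulv m x (mulv m y z)) \<and>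
     (\<forall>x. mulv m u x = x \<and> mulv m x u = x) \<and>
     rq_identity q m u P"

definition Rq_morphism :: "('a \<Rightarrow> 'a \<Rightarrow> ('a \<Rightarrow>\<^sub>0 'k::field)) \<Rightarrow> ('a \<Rightarrow>\<^sub>0 'k) \<Rightarrow> ('a \<Rightarrow> ('a \<Rightarrow>\<^sub>0 'k))
    \<Rightarrow> ('c \<Rightarrow> 'c \<Rightarrow> ('c \<Rightarrow>\<^sub>0 'k)) \<Rightarrow> ('c \<Rightarrow>\<^sub>0 'k) \<Rightarrow> ('c \<Rightarrow> ('c \<Rightarrow>\<^sub>0 'k))
    \<Rightarrow> ('a \<Rightarrow> ('c \<Rightarrow>\<^sub>0 'k)) \<Rightarrow> bool" where
  "Rq_morphism m u P m' u' P' f \<longleftrightarrow>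
     lin f u = u' \<and>
     (\<forall>x y. lin f (mulv m x y) = mulv m' (lin f x) (lin f y)) \<and>
     (\<forall>x. lin f (lin P x) = lin P' (lin f x))"

definition scalar_op :: "'k::field rbq \<Rightarrow> 'k" where
  "scalar_op q = (case q of RB \<theta> \<Rightarrow> - \<theta> | Nij \<Rightarrow> 1 | TD \<Rightarrow> 1)"

definition Rq_morphism_K :: "'k::field rbq \<Rightarrow> ('a \<Rightarrow> 'a \<Rightarrow> ('a \<Rightarrow>\<^sub>0 'k)) \<Rightarrow> ('a \<Rightarrow>\<^sub>0 'k)
    \<Rightarrow> ('a \<Rightarrow> ('a \<Rightarrow>\<^sub>0 'k)) \<Rightarrow> ('a \<Rightarrow> 'k) \<Rightarrow> bool" where
  "Rq_morphism_K q m u P e \<longleftrightarrow>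
     linK e u = 1 \<and>
     (\<forall>x y. linK e (mulv m x y) = linK e x * linK e y) \<and>
     (\<forall>x. linK e (lin P x) = scalar_op q * linK e x)"

(* Coassociativity (\<Delta> \<otimes> id)\<Delta> = (id \<otimes> \<Delta>)\<Delta>, with (B\<otimes>B)\<otimes>B and B\<otimes>(B\<otimes>B) identified. *)
definition coassoc :: "('a \<Rightarrow> ('a \<times> 'a \<Rightarrow>\<^sub>0 'k::field)) \<Rightarrow> bool" where
  "coassoc D \<longleftrightarrow> (\<forall>w.
     lin (\<lambda>(x, y). tens (D x) (vec y)) (D w) =
     lin (\<lambda>(x, y). lin (\<lambda>(y1, y2). vec ((x, y1), y2)) (D y)) (D w))"

definition right_counit :: "('a \<Rightarrow> ('a \<times> 'a \<Rightarrow>\<^sub>0 'k::field)) \<Rightarrow> ('a \<Rightarrow> 'k) \<Rightarrow> bool" where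
  "right_counit D e \<longleftrightarrow> (\<forall>w. lin (\<lambda>(x, y). smul (e y) (vec x)) (D w) = vec w)"

definition left_counit :: "('a \<Rightarrow> ('a \<times> 'a \<Rightarrow>\<^sub>0 'k::field)) \<Rightarrow> ('a \<Rightarrow> 'k) \<Rightarrow> bool" where
  "left_counit D e \<longleftrightarrow> (\<forall>w. lin (\<lambda>(x, y). smul (e x) (vec y)) (D w) = vec w)"

definition comm_bialgebra :: "('b \<Rightarrow> 'b \<Rightarrow> ('b \<Rightarrow>\<^sub>0 'k::field)) \<Rightarrow> ('b \<Rightarrow>\<^sub>0 'k)
    \<Rightarrow> ('b \<Rightarrow> ('b \<times> 'b \<Rightarrow>\<^sub>0 'k)) \<Rightarrow> ('b \<Rightarrow> 'k) \<Rightarrow> bool" where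
  "comm_bialgebra m u cop cou \<longleftrightarrow>
     (\<forall>x y z. mulv m (mulv m x y) z = mulv m x (mulv m y z)) \<and>
     (\<forall>x y. mulv m x y = mulv m y x) \<and>
     (\<forall>x. mulv m u x = x \<and> mulv m x u = x) \<and>
     coassoc cop \<and> right_counit cop cou \<and> left_counit cop cou \<and>
     lin cop u = tens u u \<and>
     (\<forall>x y. lin cop (mulv m x y) = mulv (tensmul m) (lin cop x) (lin cop y)) \<and>
     linK cou u = 1 \<and>
     (\<forall>x y. linK cou (mulv m x y) = linK cou x * linK cou y)"

definition right_Rq_bialgebra :: "'k::field rbq \<Rightarrow> ('a \<Rightarrow> 'a \<Rightarrow> ('a \<Rightarrow>\<^sub>0 'k)) \<Rightarrow> ('a \<Rightarrow>\<^sub>0 'k)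
    \<Rightarrow> ('a \<Rightarrow> ('a \<Rightarrow>\<^sub>0 'k)) \<Rightarrow> ('a \<Rightarrow> ('a \<times> 'a \<Rightarrow>\<^sub>0 'k)) \<Rightarrow> ('a \<Rightarrow> 'k) \<Rightarrow> bool" where
  "right_Rq_bialgebra q m u P D e \<longleftrightarrow>
     is_Rq_algebra q m u P \<and> coassoc D \<and> right_counit D e \<and>
     Rq_morphism m u P (tensmul m) (tens u u) (tensop P) D \<and>
     Rq_morphism_K q m u P e"

(* T(H): basis = lists of basis elements of H ([] is 1_K, a # U is a \<otimes> U).
  lcons x X = x \<otimes> X for x in H, X in T(H). *)
definition lcons :: "('b \<Rightarrow>\<^sub>0 'k::field) \<Rightarrow> ('b list \<Rightarrow>\<^sub>0 'k) \<Rightarrow> ('b list \<Rightarrow>\<^sub>0 'k)" where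
  "lcons x X = lin (\<lambda>a. lin (\<lambda>W. vec (a # W)) X) x"

fun tprod :: "'k::field rbq \<Rightarrow> ('b \<Rightarrow> 'b \<Rightarrow> ('b \<Rightarrow>\<^sub>0 'k)) \<Rightarrow> ('b \<Rightarrow>\<^sub>0 'k)
    \<Rightarrow> 'b list \<Rightarrow> 'b list \<Rightarrow> ('b list \<Rightarrow>\<^sub>0 'k)" where
  "tprod q m u [] V = vec V"
| "tprod q m u (a # U) [] = vec (a # U)"
| "tprod q m u (a # U) (b # V) =
     lcons (vec a) (tprod q m u U (b # V)) + lcons (vec b) (tprod q m u (a # U) V) +
     (case q of
        RB \<theta> \<Rightarrow> smul \<theta> (lcons (m a b) (tprod q m u U V))
      | Nij \<Rightarrow> - lcons u (lcons (m a b) (tprod q m u U V))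
      | TD \<Rightarrow> - lcons (m a b) (lcons u (tprod q m u U V)))"

(* T^+(H) = H \<otimes> T(H): basis 'b \<times> 'b list. Product \<bar>\<bullet>^q, unit, operator P_H, and i_H. *)
definition tpmul :: "'k::field rbq \<Rightarrow> ('b \<Rightarrow> 'b \<Rightarrow> ('b \<Rightarrow>\<^sub>0 'k)) \<Rightarrow> ('b \<Rightarrow>\<^sub>0 'k)
    \<Rightarrow> 'b \<times> 'b list \<Rightarrow> 'b \<times> 'b list \<Rightarrow> ('b \<times> 'b list \<Rightarrow>\<^sub>0 'k)" where
  "tpmul q m u = (\<lambda>(a, U) (b, V). tens (m a b) (tprod q m u U V))"

definition tpunit :: "('b \<Rightarrow>\<^sub>0 'k::field) \<Rightarrow> ('b \<times> 'b list \<Rightarrow>\<^sub>0 'k)" where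
  "tpunit u = tens u (vec [])"

definition tpP :: "('b \<Rightarrow>\<^sub>0 'k::field) \<Rightarrow> 'b \<times> 'b list \<Rightarrow> ('b \<times> 'b list \<Rightarrow>\<^sub>0 'k)" where
  "tpP u = (\<lambda>(a, U). tens u (vec (a # U)))"

definition iH :: "'b \<Rightarrow> ('b \<times> 'b list \<Rightarrow>\<^sub>0 'k::field)" where
  "iH h = vec (h, [])"

end

theory Submission
  imports Defs
begin

lemma lookup_smul[simp]: "Poly_Mapping.lookup (smul (c::'k::field) p) k = c * Poly_Mapping.lookup p k"
  by (simp add: smul_def Poly_Mapping.map.rep_eq when_def)

lemma keys_smul: "Poly_Mapping.keys (smul c p) \<subseteq> Poly_Mapping.keys p"
  by (auto simp: in_keys_iff)

lemma smul_add_right: "smul c (x + y) = smul c x + smul c y"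
  by (rule poly_mapping_eqI) (simp add: lookup_add algebra_simps)
lemma smul_add_left: "smul (c + d) x = smul c x + smul d x"
  by (rule poly_mapping_eqI) (simp add: lookup_add algebra_simps)
lemma smul_smul[simp]: "smul c (smul d x) = smul (c * d) x"
  by (rule poly_mapping_eqI) simp
lemma smul_zero_right[simp]: "smul c 0 = 0"
  by (rule poly_mapping_eqI) simp
lemma smul_zero_left[simp]: "smul 0 x = 0"
  by (rule poly_mapping_eqI) simp
lemma smul_one[simp]: "smul 1 x = x"
  by (rule poly_mapping_eqI) simp
lemma smul_neg_right: "smul c (- x) = - smul c x"
  by (rule poly_mapping_eqI) simp
lemma smul_neg_left: "smul (- c) x = - smul c x"
  by (rule poly_mapping_eqI) simp
lemma smul_diff_right: "smul c (x - y) = smul c x - smul c y"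
  by (rule poly_mapping_eqI) (simp add: lookup_minus algebra_simps)
lemma smul_sum: "smul c (sum f S) = (\<Sum>a\<in>S. smul c (f a))"
  by (rule poly_mapping_eqI) (simp add: lookup_sum sum_distrib_left)

lemma lookup_vec: "Poly_Mapping.lookup (vec a) b = (if a = b then 1 else 0)"
  by (simp add: vec_def lookup_single)
lemma keys_vec[simp]: "Poly_Mapping.keys (vec a :: _ \<Rightarrow>\<^sub>0 'k::field) = {a}"
  by (simp add: vec_def)

lemma lin_superset:
  assumes "finite S" "Poly_Mapping.keys x \<subseteq> S"
  shows "lin f x = (\<Sum>a\<in>S. smul (Poly_Mapping.lookup x a) (f a))"
  unfolding lin_def
  by (rule sum.mono_neutral_left) (use assms in \<open>auto simp: in_keys_iff\<close>)

lemma lookup_lin: "Poly_Mapping.lookup (lin f x) b = (\<Sum>a\<in>Poly_Mapping.keys x. Poly_Mapping.lookup x a * Poly_Mapping.lookup (f a) b)"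
  by (simp add: lin_def lookup_sum)

lemma lin_add[simp]: "lin f (x + y) = lin f x + lin f y"
proof -
  let ?S = "Poly_Mapping.keys x \<union> Poly_Mapping.keys y"
  have "Poly_Mapping.keys (x + y) \<subseteq> ?S" by (rule keys_add)
  then have "lin f (x + y) = (\<Sum>a\<in>?S. smul (Poly_Mapping.lookup (x + y) a) (f a))"
    by (intro lin_superset) auto
  also have "\<dots> = (\<Sum>a\<in>?S. smul (Poly_Mapping.lookup x a) (f a)) + (\<Sum>a\<in>?S. smul (Poly_Mapping.lookup y a) (f a))"
    by (simp add: lookup_add smul_add_left sum.distrib)
  also have "\<dots> = lin f x + lin f y"
    by (subst (1 2) lin_superset[of ?S]) auto
  finally show ?thesis .
qed

lemma lin_smul[simp]: "lin f (smul c x) = smul c (lin f x)"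
proof -
  have "lin f (smul c x) = (\<Sum>a\<in>Poly_Mapping.keys x. smul (Poly_Mapping.lookup (smul c x) a) (f a))"
    by (intro lin_superset keys_smul) auto
  also have "\<dots> = smul c (lin f x)"
    by (simp add: lin_def smul_sum)
  finally show ?thesis .
qed

lemma lin_zero[simp]: "lin f 0 = 0"
  by (simp add: lin_def)

lemma lin_neg[simp]: "lin f (- x) = - lin f x"
  using lin_add[of f x "-x"] by (simp add: minus_unique)

lemma lin_diff[simp]: "lin f (x - y) = lin f x - lin f y"
  using lin_add[of f x "-y"] by simp

lemma lin_sum: "lin f (sum g S) = (\<Sum>a\<in>S. lin f (g a))"
  by (induction S rule: infinite_finite_induct) auto

lemma lin_vec[simp]: "lin f (vec a) = f a"
  by (simp add: lin_def vec_def)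

lemma lin_cong: "(\<And>a. a \<in> Poly_Mapping.keys x \<Longrightarrow> f a = g a) \<Longrightarrow> lin f x = lin g x"
  by (simp add: lin_def)

lemma lin_comp: "lin g (lin f x) = lin (\<lambda>a. lin g (f a)) x"
proof -
  have "lin g (lin f x) = (\<Sum>a\<in>Poly_Mapping.keys x. lin g (smul (Poly_Mapping.lookup x a) (f a)))"
    by (simp only: lin_def[of f x] lin_sum)
  then show ?thesis by (simp add: lin_def[of "\<lambda>a. lin g (f a)"])
qed

lemma lin_vec_id[simp]: "lin vec x = x"
  by (rule poly_mapping_eqI) (auto simp: lookup_lin lookup_vec in_keys_iff if_distrib cong: if_cong)

lemma lin_fun_add: "lin (\<lambda>a. f a + g a) x = lin f x + lin g x"
  by (simp add: lin_def smul_add_right sum.distrib)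
lemma lin_fun_smul: "lin (\<lambda>a. smul c (f a)) x = smul c (lin f x)"
  by (rule poly_mapping_eqI) (simp add: lookup_lin sum_distrib_left algebra_simps)
lemma lin_fun_neg: "lin (\<lambda>a. - f a) x = - lin f x"
  by (rule poly_mapping_eqI) (simp add: lookup_lin sum_negf)
lemma lin_fun_zero[simp]: "lin (\<lambda>a. 0) x = 0"
  by (simp add: lin_def)

definition bil :: "('a \<Rightarrow> 'b \<Rightarrow> ('c \<Rightarrow>\<^sub>0 'k::field)) \<Rightarrow> ('a \<Rightarrow>\<^sub>0 'k) \<Rightarrow> ('b \<Rightarrow>\<^sub>0 'k) \<Rightarrow> ('c \<Rightarrow>\<^sub>0 'k)" where
  "bil B x y = lin (\<lambda>a. lin (\<lambda>b. B a b) y) x"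

lemma mulv_bil: "mulv m = bil m"
  by (simp add: fun_eq_iff mulv_def bil_def)
lemma tens_bil: "tens = bil (\<lambda>a c. vec (a, c))"
  by (simp add: fun_eq_iff tens_def bil_def)
lemma lcons_bil: "lcons = bil (\<lambda>a W. vec (a # W))"
  by (simp add: fun_eq_iff lcons_def bil_def)

lemma bil_add_left[simp]: "bil B (x + x') y = bil B x y + bil B x' y"
  by (simp add: bil_def)
lemma bil_add_right[simp]: "bil B x (y + y') = bil B x y + bil B x y'"
  by (simp add: bil_def lin_fun_add)
lemma bil_smul_left[simp]: "bil B (smul c x) y = smul c (bil B x y)"
  by (simp add: bil_def)
lemma bil_smul_right[simp]: "bil B x (smul c y) = smul c (bil B x y)"
  by (simp add: bil_def lin_fun_smul)
lemma bil_neg_left[simp]: "bil B (- x) y = - bil B x y"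
  by (simp add: bil_def)
lemma bil_neg_right[simp]: "bil B x (- y) = - bil B x y"
  by (simp add: bil_def lin_fun_neg)
lemma bil_diff_left[simp]: "bil B (x - x') y = bil B x y - bil B x' y"
  by (simp add: bil_def)
lemma bil_diff_right[simp]: "bil B x (y - y') = bil B x y - bil B x y'"
  using bil_add_right[of B x y "-y'"] by simp
lemma bil_zero_left[simp]: "bil B 0 y = 0"
  by (simp add: bil_def)
lemma bil_zero_right[simp]: "bil B x 0 = 0"
  by (simp add: bil_def)
lemma bil_vec_vec[simp]: "bil B (vec a) (vec b) = B a b"
  by (simp add: bil_def)

lemma bil_left: "bil B x y = lin (\<lambda>a. bil B (vec a) y) x"
  by (simp add: bil_def)

lemma lin_swap: "lin (\<lambda>a. lin (\<lambda>b. B a b) y) x = lin (\<lambda>b. lin (\<lambda>a. B a b) x) y"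
  by (rule poly_mapping_eqI) (simp add: lookup_lin sum_distrib_left sum_distrib_right algebra_simps sum.swap[of _ "Poly_Mapping.keys x"])

lemma bil_right: "bil B x y = lin (\<lambda>b. bil B x (vec b)) y"
  by (simp add: bil_def lin_swap[of _ y])

lemma lin_bil: "lin h (bil B x y) = bil (\<lambda>a b. lin h (B a b)) x y"
  by (simp add: bil_def lin_comp)

lemma bil_lin: "bil B (lin f x) (lin g y) = bil (\<lambda>a b. bil B (f a) (g b)) x y"
proof -
  have 1: "bil B (lin f x) Y = lin (\<lambda>a. bil B (f a) Y) x" for Y
    by (simp add: bil_def lin_comp)
  have 2: "bil B X (lin g y) = lin (\<lambda>b. bil B X (g b)) y" for X
    unfolding bil_def lin_comp by (rule lin_swap)
  show ?thesis unfolding 1 2 bil_def[of "\<lambda>a b. bil B (f a) (g b)"] by (rule lin_swap[symmetric])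
qed

lemma bil_lin_left: "bil B (lin f x) y = bil (\<lambda>a b. bil B (f a) (vec b)) x y"
  using bil_lin[of B f x vec y] by simp
lemma bil_lin_right: "bil B x (lin g y) = bil (\<lambda>a b. bil B (vec a) (g b)) x y"
  using bil_lin[of B vec x g y] by simp

lemma bil_cong: "(\<And>a b. a \<in> Poly_Mapping.keys x \<Longrightarrow> b \<in> Poly_Mapping.keys y \<Longrightarrow> B a b = C a b) \<Longrightarrow> bil B x y = bil C x y"
  unfolding bil_def by (intro lin_cong) auto

lemma bil_fun_add: "bil (\<lambda>a b. B a b + C a b) x y = bil B x y + bil C x y"
  by (simp add: bil_def lin_fun_add)
lemma bil_fun_smul: "bil (\<lambda>a b. smul c (B a b)) x y = smul c (bil B x y)"
  by (simp add: bil_def lin_fun_smul)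
lemma bil_fun_neg: "bil (\<lambda>a b. - B a b) x y = - bil B x y"
  by (simp add: bil_def lin_fun_neg)

lemma linK_superset:
  assumes "finite S" "Poly_Mapping.keys x \<subseteq> S"
  shows "linK f x = (\<Sum>a\<in>S. Poly_Mapping.lookup x a * f a)"
  unfolding linK_def
  by (rule sum.mono_neutral_left) (use assms in \<open>auto simp: in_keys_iff\<close>)

lemma linK_add[simp]: "linK f (x + y) = linK f x + linK f y"
proof -
  let ?S = "Poly_Mapping.keys x \<union> Poly_Mapping.keys y"
  have "Poly_Mapping.keys (x + y) \<subseteq> ?S" by (rule keys_add)
  then have "linK f (x + y) = (\<Sum>a\<in>?S. Poly_Mapping.lookup (x + y) a * f a)"
    by (intro linK_superset) auto
  also have "\<dots> = linK f x + linK f y"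
    by (subst (1 2) linK_superset[of ?S]) (auto simp: lookup_add sum.distrib algebra_simps)
  finally show ?thesis .
qed

lemma linK_smul[simp]: "linK f (smul c x) = c * linK f x"
proof -
  have "linK f (smul c x) = (\<Sum>a\<in>Poly_Mapping.keys x. Poly_Mapping.lookup (smul c x) a * f a)"
    by (intro linK_superset keys_smul) auto
  then show ?thesis by (simp add: linK_def sum_distrib_left algebra_simps)
qed

lemma linK_zero[simp]: "linK f 0 = 0"
  by (simp add: linK_def)
lemma linK_neg[simp]: "linK f (- x) = - linK f x"
  using linK_add[of f x "-x"] by (simp add: minus_unique)
lemma linK_sum: "linK f (sum g S) = (\<Sum>a\<in>S. linK f (g a))"
  by (induction S rule: infinite_finite_induct) auto
lemma linK_vec[simp]: "linK f (vec a) = f a"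
  by (simp add: linK_def vec_def)
lemma linK_cong: "(\<And>a. a \<in> Poly_Mapping.keys x \<Longrightarrow> f a = g a) \<Longrightarrow> linK f x = linK g x"
  by (simp add: linK_def)
lemma linK_lin: "linK g (lin f x) = linK (\<lambda>a. linK g (f a)) x"
  by (simp add: lin_def linK_sum linK_def[of _ x] sum_distrib_left algebra_simps)

definition islin :: "(('a \<Rightarrow>\<^sub>0 'k::field) \<Rightarrow> ('c \<Rightarrow>\<^sub>0 'k)) \<Rightarrow> bool" where
  "islin F \<longleftrightarrow> (\<forall>x y. F (x + y) = F x + F y) \<and> (\<forall>c x. F (smul c x) = smul c (F x))"

lemma islin_sum: "islin F \<Longrightarrow> F (sum g S) = (\<Sum>a\<in>S. F (g a))"
proof (induction S rule: infinite_finite_induct)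
  case (infinite A)
  then show ?case using islin_def[of F] smul_zero_left[of "F 0"] smul_zero_left[of 0]
    by (metis sum.infinite)
next
  case empty
  then show ?case using islin_def[of F] smul_zero_left[of "F 0"] smul_zero_left[of 0]
    by (metis sum.empty)
next
  case (insert x F)
  then show ?case by (simp add: islin_def)
qed

lemma islin_lin: "islin F \<Longrightarrow> F x = lin (\<lambda>a. F (vec a)) x"
proof -
  assume L: "islin F"
  have "F x = F (lin vec x)" by simp
  also have "\<dots> = (\<Sum>a\<in>Poly_Mapping.keys x. F (smul (Poly_Mapping.lookup x a) (vec a)))"
    unfolding lin_def by (rule islin_sum[OF L])
  also have "\<dots> = lin (\<lambda>a. F (vec a)) x"
    using L by (simp add: islin_def lin_def)
  finally show ?thesis .
qed

lemma lin_ext: "islin F \<Longrightarrow> islin G \<Longrightarrow> (\<And>a. F (vec a) = G (vec a)) \<Longrightarrow> F x = G x"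
  by (subst islin_lin[of F], assumption, subst islin_lin[of G], assumption) simp

lemma islin_lin_fun[simp]: "islin (lin f)"
  by (simp add: islin_def)

lemma lcons_add_left[simp]: "lcons (x + x') y = lcons x y + lcons x' y"
  and lcons_add_right[simp]: "lcons x (y + y') = lcons x y + lcons x y'"
  and lcons_smul_left[simp]: "lcons (smul c x) y = smul c (lcons x y)"
  and lcons_smul_right[simp]: "lcons x (smul c y) = smul c (lcons x y)"
  and lcons_neg_left[simp]: "lcons (- x) y = - lcons x y"
  and lcons_neg_right[simp]: "lcons x (- y) = - lcons x y"
  and lcons_diff_left[simp]: "lcons (x - x') y = lcons x y - lcons x' y"
  and lcons_diff_right[simp]: "lcons x (y - y') = lcons x y - lcons x y'"
  and lcons_zero_left[simp]: "lcons 0 y = 0"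
  and lcons_zero_right[simp]: "lcons x 0 = 0"
  and lcons_vec_vec[simp]: "lcons (vec a) (vec U) = vec (a # U)"
  by (simp_all add: lcons_bil)

lemma tens_add_left[simp]: "tens (x + x') y = tens x y + tens x' y"
  and tens_add_right[simp]: "tens x (y + y') = tens x y + tens x y'"
  and tens_smul_left[simp]: "tens (smul c x) y = smul c (tens x y)"
  and tens_smul_right[simp]: "tens x (smul c y) = smul c (tens x y)"
  and tens_neg_left[simp]: "tens (- x) y = - tens x y"
  and tens_neg_right[simp]: "tens x (- y) = - tens x y"
  and tens_diff_left[simp]: "tens (x - x') y = tens x y - tens x' y"
  and tens_diff_right[simp]: "tens x (y - y') = tens x y - tens x y'"
  and tens_zero_left[simp]: "tens 0 y = 0"
  and tens_zero_right[simp]: "tens x 0 = 0"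
  and tens_vec_vec[simp]: "tens (vec a) (vec b) = vec (a, b)"
  by (simp_all add: tens_bil)

declare smul_add_right[simp] smul_neg_right[simp] smul_diff_right[simp]

definition phi :: "'k::field rbq \<Rightarrow> ('b \<Rightarrow>\<^sub>0 'k) \<Rightarrow> ('b \<Rightarrow>\<^sub>0 'k) \<Rightarrow> ('b list \<Rightarrow>\<^sub>0 'k) \<Rightarrow> ('b list \<Rightarrow>\<^sub>0 'k)" where
  "phi q u w Z = (case q of RB \<theta> \<Rightarrow> smul \<theta> (lcons w Z) | Nij \<Rightarrow> - lcons u (lcons w Z) | TD \<Rightarrow> - lcons w (lcons u Z))"

lemma phi_lin[simp]:
  "phi q u (w + w') Z = phi q u w Z + phi q u w' Z"
  "phi q u w (Z + Z') = phi q u w Z + phi q u w Z'"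
  "phi q u (smul c w) Z = smul c (phi q u w Z)"
  "phi q u w (smul c Z) = smul c (phi q u w Z)"
  "phi q u (- w) Z = - phi q u w Z"
  "phi q u w (- Z) = - phi q u w Z"
  "phi q u 0 Z = 0"
  "phi q u w 0 = 0"
  by (cases q; simp add: phi_def ac_simps)+

lemma phi_diff[simp]:
  "phi q u (w - w') Z = phi q u w Z - phi q u w' Z"
  "phi q u w (Z - Z') = phi q u w Z - phi q u w Z'"
  using phi_lin(1)[of q u w "-w'" Z] phi_lin(2)[of q u w Z "-Z'"] by simp_all

lemma tprod_cons[simp]: "tprod q m u (a # U) (b # V) =
     lcons (vec a) (tprod q m u U (b # V)) + lcons (vec b) (tprod q m u (a # U) V) + phi q u (m a b) (tprod q m u U V)"
  by (simp add: phi_def)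
declare tprod.simps(3)[simp del]

locale Halg =
  fixes m :: "'b \<Rightarrow> 'b \<Rightarrow> ('b \<Rightarrow>\<^sub>0 'k::field)" and u :: "'b \<Rightarrow>\<^sub>0 'k"
  assumes massoc: "\<And>x y z. bil m (bil m x y) z = bil m x (bil m y z)"
    and munit_l[simp]: "\<And>x. bil m u x = x"
    and munit_r[simp]: "\<And>x. bil m x u = x"
begin

abbreviation TP where "TP q \<equiv> bil (tprod q m u)"

lemma tprod_Nil_right[simp]: "tprod q m u U [] = vec U"
  by (cases U) auto

lemma TP_Nil_left[simp]: "TP q (vec []) X = X"
  by (subst bil_right) simp

lemma TP_Nil_right[simp]: "TP q X (vec []) = X"
  by (subst bil_left) simp

lemma expand_basis:
  "TP q (lcons (vec a) (vec U)) (lcons (vec b) (vec V)) =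
    lcons (vec a) (TP q (vec U) (lcons (vec b) (vec V))) + lcons (vec b) (TP q (lcons (vec a) (vec U)) (vec V))
    + phi q u (bil m (vec a) (vec b)) (TP q (vec U) (vec V))"
  by simp

lemma expand:
  "TP q (lcons x X) (lcons y Y) =
    lcons x (TP q X (lcons y Y)) + lcons y (TP q (lcons x X) Y) + phi q u (bil m x y) (TP q X Y)"
proof -
  have A: "\<And>a U b. TP q (vec (a # U)) (lcons (vec b) Y) =
    lcons (vec a) (TP q (vec U) (lcons (vec b) Y)) + lcons (vec b) (TP q (vec (a # U)) Y) + phi q u (m a b) (TP q (vec U) Y)"
    by (rule lin_ext[where x=Y]) (auto simp: islin_def expand_basis)
  have B: "\<And>a U. TP q (vec (a # U)) (lcons y Y) =
    lcons (vec a) (TP q (vec U) (lcons y Y)) + lcons y (TP q (vec (a # U)) Y) + phi q u (bil m (vec a) y) (TP q (vec U) Y)"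
    by (rule lin_ext[where x=y]) (auto simp: islin_def A)
  have C: "\<And>a. TP q (lcons (vec a) X) (lcons y Y) =
    lcons (vec a) (TP q X (lcons y Y)) + lcons y (TP q (lcons (vec a) X) Y) + phi q u (bil m (vec a) y) (TP q X Y)"
    by (rule lin_ext[where x=X]) (auto simp: islin_def B)
  show ?thesis
    by (rule lin_ext[where x=x]) (auto simp: islin_def C)
qed

end

definition xi :: "'k::field rbq \<Rightarrow> ('b \<Rightarrow>\<^sub>0 'k) \<Rightarrow> ('b \<Rightarrow>\<^sub>0 'k) \<Rightarrow> ('b list \<Rightarrow>\<^sub>0 'k) \<Rightarrow> ('b list \<Rightarrow>\<^sub>0 'k)" where
  "xi q u w V = (case q of RB \<theta> \<Rightarrow> smul (\<theta> * \<theta>) (lcons w V) | Nij \<Rightarrow> lcons u (lcons u (lcons w V)) | TD \<Rightarrow> lcons w (lcons u (lcons u V)))"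

context Halg
begin

lemma uL_basis: "TP TD (lcons u W) (vec V) = lcons u (TP TD W (vec V))"
proof (induction V arbitrary: W)
  case Nil
  then show ?case by simp
next
  case (Cons b V)
  have "TP TD (lcons u W) (vec (b # V)) = TP TD (lcons u W) (lcons (vec b) (vec V))" by simp
  also have "\<dots> = lcons u (TP TD W (vec (b # V)))"
    by (subst expand) (simp add: Cons phi_def)
  finally show ?case .
qed

lemma uL: "TP TD (lcons u W) V = lcons u (TP TD W V)"
  by (rule lin_ext[where x=V]) (auto simp: islin_def uL_basis)

lemma uR_basis: "TP TD (vec V) (lcons u W) = lcons u (TP TD (vec V) W)"
proof (induction V arbitrary: W)
  case Nil
  then show ?case by simp
next
  case (Cons a V)
  have "TP TD (vec (a # V)) (lcons u W) = TP TD (lcons (vec a) (vec V)) (lcons u W)" by simp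
  also have "\<dots> = lcons u (TP TD (vec (a # V)) W)"
    by (subst expand) (simp add: Cons phi_def)
  finally show ?case .
qed

lemma uR: "TP TD V (lcons u W) = lcons u (TP TD V W)"
  by (rule lin_ext[where x=V]) (auto simp: islin_def uR_basis)

lemma PsiL: "TP q (phi q u w W) (lcons C Z) =
   lcons C (TP q (phi q u w W) Z) + phi q u w (TP q W (lcons C Z)) + xi q u (bil m w C) (TP q W Z)"
  by (cases q) (simp_all add: phi_def xi_def expand uL uR)

lemma PsiR: "TP q (lcons A X) (phi q u w W) =
   lcons A (TP q X (phi q u w W)) + phi q u w (TP q (lcons A X) W) + xi q u (bil m A w) (TP q X W)"
  by (cases q) (simp_all add: phi_def xi_def expand uL uR)

end

context Halg
begin

lemma LHS: "TP q (TP q (lcons A X) (lcons B Y)) (lcons C Z) =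
   lcons A (TP q (TP q X (lcons B Y)) (lcons C Z)) + lcons B (TP q (TP q (lcons A X) Y) (lcons C Z))
 + lcons C (TP q (TP q (lcons A X) (lcons B Y)) Z)
 + phi q u (bil m A C) (TP q (TP q X (lcons B Y)) Z) + phi q u (bil m B C) (TP q (TP q (lcons A X) Y) Z)
 + phi q u (bil m A B) (TP q (TP q X Y) (lcons C Z)) + xi q u (bil m (bil m A B) C) (TP q (TP q X Y) Z)"
  by (simp add: expand PsiL)

lemma RHS: "TP q (lcons A X) (TP q (lcons B Y) (lcons C Z)) =
   lcons A (TP q X (TP q (lcons B Y) (lcons C Z))) + lcons B (TP q (lcons A X) (TP q Y (lcons C Z)))
 + lcons C (TP q (lcons A X) (TP q (lcons B Y) Z))
 + phi q u (bil m A B) (TP q X (TP q Y (lcons C Z))) + phi q u (bil m A C) (TP q X (TP q (lcons B Y) Z))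
 + phi q u (bil m B C) (TP q (lcons A X) (TP q Y Z)) + xi q u (bil m A (bil m B C)) (TP q X (TP q Y Z))"
  by (simp add: expand PsiR)

lemma assoc_basis: "TP q (TP q (vec U) (vec V)) (vec W) = TP q (vec U) (TP q (vec V) (vec W))"
proof (induction "length U + length V + length W" arbitrary: U V W rule: less_induct)
  case less
  show ?case
  proof (cases "U = [] \<or> V = [] \<or> W = []")
    case True
    then show ?thesis by auto
  next
    case False
    then obtain a U' b V' c W' where U: "U = a # U'" and V: "V = b # V'" and W: "W = c # W'"
      by (meson list.exhaust)
    have IH: "\<And>U V W. length U + length V + length W < length (a # U') + length (b # V') + length (c # W') \<Longrightarrow>
       TP q (TP q (vec U) (vec V)) (vec W) = TP q (vec U) (TP q (vec V) (vec W))"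
      using less U V W by blast
    show ?thesis
      using LHS[of q "vec a" "vec U'" "vec b" "vec V'" "vec c" "vec W'"]
        RHS[of q "vec a" "vec U'" "vec b" "vec V'" "vec c" "vec W'"]
      unfolding U V W by (simp add: IH massoc del: bil_vec_vec tprod_cons)
  qed
qed

lemma TP_assoc: "TP q (TP q X Y) Z = TP q X (TP q Y Z)"
proof -
  have 1: "TP q (TP q (vec U) (vec V)) Z = TP q (vec U) (TP q (vec V) Z)" for U V
    by (rule lin_ext[where x=Z]) (auto simp: islin_def assoc_basis simp del: bil_vec_vec)
  have 2: "TP q (TP q (vec U) Y) Z = TP q (vec U) (TP q Y Z)" for U
    by (rule lin_ext[where x=Y]) (auto simp: islin_def 1 simp del: bil_vec_vec)
  show ?thesis
    by (rule lin_ext[where x=X]) (auto simp: islin_def 2)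
qed

end

lemma lin_ext_tens:
  assumes "islin F" "islin G" "\<And>x y. F (tens x y) = G (tens x y)"
  shows "F p = G p"
proof (rule lin_ext[OF assms(1,2)])
  fix a :: "'a \<times> 'b"
  obtain a1 a2 where "a = (a1, a2)" by fastforce
  then show "F (vec a) = G (vec a)" using assms(3)[of "vec a1" "vec a2"] by simp
qed

context Halg
begin

abbreviation MP where "MP q \<equiv> bil (tpmul q m u)"
abbreviation PP where "PP \<equiv> lin (tpP u)"

lemma TPP: "MP q (tens x X) (tens y Y) = tens (bil m x y) (TP q X Y)"
proof -
  have 1: "MP q (tens (vec a) (vec U)) (tens (vec b) Y) = tens (bil m (vec a) (vec b)) (TP q (vec U) Y)" for a U b
    by (rule lin_ext[where x=Y]) (auto simp: islin_def tpmul_def)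
  have 2: "MP q (tens (vec a) (vec U)) (tens y Y) = tens (bil m (vec a) y) (TP q (vec U) Y)" for a U
    by (rule lin_ext[where x=y]) (auto simp: islin_def 1 simp del: tens_vec_vec bil_vec_vec)
  have 3: "MP q (tens (vec a) X) (tens y Y) = tens (bil m (vec a) y) (TP q X Y)" for a
    by (rule lin_ext[where x=X]) (auto simp: islin_def 2 simp del: tens_vec_vec bil_vec_vec)
  show ?thesis
    by (rule lin_ext[where x=x]) (auto simp: islin_def 3 simp del: tens_vec_vec bil_vec_vec)
qed

lemma PP_tens: "PP (tens x X) = tens u (lcons x X)"
proof -
  have 1: "PP (tens (vec a) X) = tens u (lcons (vec a) X)" for a
    by (rule lin_ext[where x=X]) (auto simp: islin_def tpP_def)
  show ?thesis
    by (rule lin_ext[where x=x]) (auto simp: islin_def 1 simp del: tens_vec_vec)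
qed

lemma MP_assoc: "MP q (MP q x y) z = MP q x (MP q y z)"
proof -
  have 1: "MP q (MP q (tens a A) (tens b B)) z = MP q (tens a A) (MP q (tens b B) z)" for a A b B
    by (rule lin_ext_tens[where p=z]) (auto simp: islin_def TPP massoc TP_assoc)
  have 2: "MP q (MP q (tens a A) y) z = MP q (tens a A) (MP q y z)" for a A
    by (rule lin_ext_tens[where p=y]) (auto simp: islin_def 1)
  show ?thesis
    by (rule lin_ext_tens[where p=x]) (auto simp: islin_def 2)
qed

lemma MP_unit_l: "MP q (tpunit u) x = x"
  unfolding tpunit_def
  by (rule lin_ext_tens[where p=x]) (auto simp: islin_def TPP)

lemma MP_unit_r: "MP q x (tpunit u) = x"
  unfolding tpunit_def
  by (rule lin_ext_tens[where p=x]) (auto simp: islin_def TPP)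

end

lemma islin_comp: "islin F \<Longrightarrow> islin G \<Longrightarrow> islin (\<lambda>x. F (G x))"
  by (simp add: islin_def)
lemma islin_id: "islin (\<lambda>x. x)"
  by (simp add: islin_def)
lemma islin_bil_r: "islin (\<lambda>y. bil B x y)"
  by (simp add: islin_def)
lemma islin_bil_l: "islin (\<lambda>x. bil B x y)"
  by (simp add: islin_def)
lemma islin_add: "islin F \<Longrightarrow> islin G \<Longrightarrow> islin (\<lambda>x. F x + G x)"
  by (simp add: islin_def)
lemma islin_diff: "islin F \<Longrightarrow> islin G \<Longrightarrow> islin (\<lambda>x. F x - G x)"
  by (simp add: islin_def)
lemma islin_smul: "islin F \<Longrightarrow> islin (\<lambda>x. smul c (F x))"
  by (simp add: islin_def mult.commute)
lemma islin_neg: "islin F \<Longrightarrow> islin (\<lambda>x. - F x)"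
  by (simp add: islin_def)
lemma islin_lin': "islin F \<Longrightarrow> islin (\<lambda>x. lin f (F x))"
  by (simp add: islin_def)

lemmas islin_intros = islin_comp[OF islin_bil_r] islin_comp[OF islin_bil_l] islin_comp[OF islin_lin_fun]
   islin_add islin_diff islin_smul islin_neg islin_id

context Halg begin
lemma rq_T: "rq_identity q (tpmul q m u) (tpunit u) (tpP u)"
proof -
  have "MP q (PP x) (PP y) =
       PP (MP q (PP x) y + MP q x (PP y)) +
       (case q of
          RB \<theta> \<Rightarrow> smul \<theta> (PP (MP q x y))
        | Nij \<Rightarrow> - PP (PP (MP q x y))
        | TD \<Rightarrow> - PP (MP q (MP q x (PP (tpunit u))) y))" for x y
  proof (cases q)
    case (RB \<theta>)
    have "MP q (PP x) (PP y) =
       PP (MP q (PP x) y + MP q x (PP y)) + smul \<theta> (PP (MP q x y))"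
    proof (rule lin_ext_tens[where p=x], (intro islin_intros)+)
      fix a A
      show "MP q (PP (tens a A)) (PP y) =
       PP (MP q (PP (tens a A)) y + MP q (tens a A) (PP y)) + smul \<theta> (PP (MP q (tens a A) y))"
        by (rule lin_ext_tens[where p=y], (intro islin_intros)+) (simp add: TPP PP_tens expand RB phi_def)
    qed
    then show ?thesis using RB by simp
  next
    case Nij
    have "MP q (PP x) (PP y) =
       PP (MP q (PP x) y + MP q x (PP y)) - PP (PP (MP q x y))"
    proof (rule lin_ext_tens[where p=x], (intro islin_intros)+)
      fix a A
      show "MP q (PP (tens a A)) (PP y) =
       PP (MP q (PP (tens a A)) y + MP q (tens a A) (PP y)) - PP (PP (MP q (tens a A) y))"
        by (rule lin_ext_tens[where p=y], (intro islin_intros)+) (simp add: TPP PP_tens expand Nij phi_def)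
    qed
    then show ?thesis using Nij by simp
  next
    case TD
    have "MP q (PP x) (PP y) =
       PP (MP q (PP x) y + MP q x (PP y)) - PP (MP q (MP q x (PP (tpunit u))) y)"
    proof (rule lin_ext_tens[where p=x], (intro islin_intros)+)
      fix a A
      show "MP q (PP (tens a A)) (PP y) =
       PP (MP q (PP (tens a A)) y + MP q (tens a A) (PP y)) - PP (MP q (MP q (tens a A) (PP (tpunit u))) y)"
        by (rule lin_ext_tens[where p=y], (intro islin_intros)+) (simp add: TPP PP_tens expand TD phi_def tpunit_def uL uR)
    qed
    then show ?thesis using TD by simp
  qed
  then show ?thesis unfolding rq_identity_def mulv_bil by blast
qed

lemma is_Rq_T: "is_Rq_algebra q (tpmul q m u) (tpunit u) (tpP u)"
  using rq_T by (simp add: is_Rq_algebra_def mulv_bil MP_assoc MP_unit_l MP_unit_r)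
end

definition prodmul :: "('a \<Rightarrow> 'a \<Rightarrow> ('c \<Rightarrow>\<^sub>0 'k::field)) \<Rightarrow> ('b \<Rightarrow> 'b \<Rightarrow> ('d \<Rightarrow>\<^sub>0 'k)) \<Rightarrow> 'a \<times> 'b \<Rightarrow> 'a \<times> 'b \<Rightarrow> ('c \<times> 'd \<Rightarrow>\<^sub>0 'k)" where
  "prodmul M1 M2 = (\<lambda>(a1, a2) (b1, b2). tens (M1 a1 b1) (M2 a2 b2))"

definition prodop :: "('a \<Rightarrow> ('c \<Rightarrow>\<^sub>0 'k::field)) \<Rightarrow> ('b \<Rightarrow> ('d \<Rightarrow>\<^sub>0 'k)) \<Rightarrow> 'a \<times> 'b \<Rightarrow> ('c \<times> 'd \<Rightarrow>\<^sub>0 'k)" where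
  "prodop f g = (\<lambda>(a, b). tens (f a) (g b))"

definition ascm :: "'a \<times> ('b \<times> 'c) \<Rightarrow> (('a \<times> 'b) \<times> 'c \<Rightarrow>\<^sub>0 'k::field)" where
  "ascm = (\<lambda>(x, (y1, y2)). vec ((x, y1), y2))"

lemma prodop_apply[simp]: "prodop f g (a, b) = tens (f a) (g b)"
  by (simp add: prodop_def)

lemma ascm_apply[simp]: "ascm (a, (b, c)) = vec ((a, b), c)"
  by (simp add: ascm_def)

lemma tensmul_eq: "tensmul M = prodmul M M"
  by (simp add: tensmul_def prodmul_def)
lemma tensop_eq: "tensop P = prodop P vec"
  by (simp add: tensop_def prodop_def)
lemma tensmap_eq: "tensmap = prodop"
  by (simp add: fun_eq_iff tensmap_def prodop_def)

lemma prodmul_tens: "bil (prodmul M1 M2) (tens x1 x2) (tens y1 y2) = tens (bil M1 x1 y1) (bil M2 x2 y2)"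
proof -
  have 1: "bil (prodmul M1 M2) (tens (vec a) (vec U)) (tens (vec b) Y) = tens (bil M1 (vec a) (vec b)) (bil M2 (vec U) Y)" for a U b Y
    by (rule lin_ext[where x=Y]) (auto simp: islin_def prodmul_def)
  have 2: "bil (prodmul M1 M2) (tens (vec a) (vec U)) (tens y Y) = tens (bil M1 (vec a) y) (bil M2 (vec U) Y)" for a U y Y
    by (rule lin_ext[where x=y]) (auto simp: islin_def 1 simp del: tens_vec_vec bil_vec_vec)
  have 3: "bil (prodmul M1 M2) (tens (vec a) X) (tens y Y) = tens (bil M1 (vec a) y) (bil M2 X Y)" for a X y Y
    by (rule lin_ext[where x=X]) (auto simp: islin_def 2 simp del: tens_vec_vec bil_vec_vec)
  show ?thesis
    by (rule lin_ext[where x=x1]) (auto simp: islin_def 3 simp del: tens_vec_vec bil_vec_vec)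
qed

lemma prodop_tens: "lin (prodop f g) (tens x y) = tens (lin f x) (lin g y)"
proof -
  have 1: "lin (prodop f g) (tens (vec a) y) = tens (f a) (lin g y)" for a
    by (rule lin_ext[where x=y]) (auto simp: islin_def prodop_def)
  show ?thesis
    by (rule lin_ext[where x=x]) (auto simp: islin_def 1 simp del: tens_vec_vec)
qed

lemma tens_vec_left: "tens (vec x) Y = lin (\<lambda>c. vec (x, c)) Y"
  by (simp add: tens_bil bil_def)

lemma asc_tens: "lin ascm (tens x (tens y z)) = tens (tens x y) z"
proof -
  have 1: "lin ascm (tens (vec a) (tens (vec b) z)) = tens (tens (vec a) (vec b)) z" for a b
    by (rule lin_ext[where x=z]) (auto simp: islin_def ascm_def)
  have 2: "lin ascm (tens (vec a) (tens y z)) = tens (tens (vec a) y) z" for a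
    by (rule lin_ext[where x=y]) (auto simp: islin_def 1 simp del: tens_vec_vec)
  show ?thesis
    by (rule lin_ext[where x=x]) (auto simp: islin_def 2 simp del: tens_vec_vec)
qed

lemma asc_mul: "lin ascm (bil (prodmul M1 (prodmul M2 M3)) X Y) =
   bil (prodmul (prodmul M1 M2) M3) (lin ascm X) (lin ascm Y)"
proof -
  have 1: "lin ascm (bil (prodmul M1 (prodmul M2 M3)) (tens x1 (tens x2 x3)) (tens y1 (tens y2 y3))) =
   bil (prodmul (prodmul M1 M2) M3) (lin ascm (tens x1 (tens x2 x3))) (lin ascm (tens y1 (tens y2 y3)))"
    for x1 x2 x3 y1 y2 y3
    by (simp add: prodmul_tens asc_tens)
  have 2: "lin ascm (bil (prodmul M1 (prodmul M2 M3)) (tens x1 (tens x2 x3)) (tens y1 Y')) =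
   bil (prodmul (prodmul M1 M2) M3) (lin ascm (tens x1 (tens x2 x3))) (lin ascm (tens y1 Y'))"
    for x1 x2 x3 y1 Y'
    by (rule lin_ext_tens[where p=Y']) (auto simp: islin_def 1 simp del: asc_tens)
  have 3: "lin ascm (bil (prodmul M1 (prodmul M2 M3)) (tens x1 (tens x2 x3)) Y) =
   bil (prodmul (prodmul M1 M2) M3) (lin ascm (tens x1 (tens x2 x3))) (lin ascm Y)"
    for x1 x2 x3
    by (rule lin_ext_tens[where p=Y]) (auto simp: islin_def 2 simp del: asc_tens)
  have 4: "lin ascm (bil (prodmul M1 (prodmul M2 M3)) (tens x1 X') Y) =
   bil (prodmul (prodmul M1 M2) M3) (lin ascm (tens x1 X')) (lin ascm Y)" for x1 X'
    by (rule lin_ext_tens[where p=X']) (auto simp: islin_def 3 simp del: asc_tens)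
  show ?thesis
    by (rule lin_ext_tens[where p=X]) (auto simp: islin_def 4 simp del: asc_tens)
qed

lemma prodop_comp: "lin (prodop f g) (lin (prodop f' g') c) = lin (prodop (\<lambda>a. lin f (f' a)) (\<lambda>b. lin g (g' b))) c"
  by (simp add: lin_comp) (rule lin_cong, auto simp: prodop_tens)

lemma asc_nat: "lin ascm (lin (prodop f (prodop g k)) Z) = lin (prodop (prodop f g) k) (lin ascm Z)"
  by (simp add: lin_comp) (rule lin_cong, auto simp: asc_tens)

lemma prodop_mul:
  assumes "\<And>x y. lin f (bil M1 x y) = bil N1 (lin f x) (lin f y)"
    and "\<And>x y. lin g (bil M2 x y) = bil N2 (lin g x) (lin g y)"
  shows "lin (prodop f g) (bil (prodmul M1 M2) X Y) = bil (prodmul N1 N2) (lin (prodop f g) X) (lin (prodop f g) Y)"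
proof -
  have 1: "lin (prodop f g) (bil (prodmul M1 M2) (tens x1 x2) Y) = bil (prodmul N1 N2) (lin (prodop f g) (tens x1 x2)) (lin (prodop f g) Y)" for x1 x2
    by (rule lin_ext_tens[where p=Y]) (auto simp: islin_def prodmul_tens prodop_tens assms simp del: tens_vec_vec)
  show ?thesis
    by (rule lin_ext_tens[where p=X]) (auto simp: islin_def 1 simp del: tens_vec_vec)
qed

lemma G2_eq: "lin (\<lambda>(x, y). lin (\<lambda>(y1, y2). vec ((x, y1), y2)) (D y)) X = lin ascm (lin (prodop vec D) X)"
  by (simp add: lin_comp) (rule lin_cong, auto simp: prodop_def tens_vec_left lin_comp ascm_def
     intro!: lin_cong split: prod.split)

context Halg
begin

lemma gen: "vec (a, b # W) = MP q (vec (a, [])) (PP (vec (b, W)))"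
proof -
  have "MP q (vec (a, [])) (PP (vec (b, W))) = MP q (tens (vec a) (vec [])) (tens u (vec (b # W)))"
    by (simp add: tpP_def)
  also have "\<dots> = vec (a, b # W)"
    by (simp only: TPP) simp
  finally show ?thesis by simp
qed

lemma uniq:
  assumes f1: "\<And>x y. lin f (MP q x y) = bil Mt (lin f x) (lin f y)"
    and f2: "\<And>x. lin f (PP x) = lin Pt (lin f x)"
    and g1: "\<And>x y. lin g (MP q x y) = bil Mt (lin g x) (lin g y)"
    and g2: "\<And>x. lin g (PP x) = lin Pt (lin g x)"
    and base: "\<And>h. f (h, []) = g (h, [])"
  shows "f (a, W) = g (a, W)"
proof (induction W arbitrary: a)
  case Nil
  then show ?case by (rule base)
next
  case (Cons b W)
  have "f (a, b # W) = lin f (vec (a, b # W))" by simp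
  also have "\<dots> = lin f (MP q (vec (a, [])) (PP (vec (b, W))))"
    by (subst gen) (rule refl)
  also have "\<dots> = bil Mt (f (a, [])) (lin Pt (f (b, W)))"
    by (simp only: f1 f2) (simp only: lin_vec)
  also have "\<dots> = bil Mt (g (a, [])) (lin Pt (g (b, W)))"
    by (simp add: base Cons)
  also have "\<dots> = lin g (MP q (vec (a, [])) (PP (vec (b, W))))"
    by (simp only: g1 g2) (simp only: lin_vec)
  also have "\<dots> = lin g (vec (a, b # W))"
    by (subst gen) (rule refl)
  also have "\<dots> = g (a, b # W)" by simp
  finally show ?case .
qed

end

lemma lin_smul_const: "lin (\<lambda>c. smul (h c) v) y = smul (linK h y) v"
  by (rule poly_mapping_eqI) (simp add: lookup_lin linK_def sum_distrib_left ac_simps)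

lemma lin_prodop_vec_vec: "lin (prodop vec vec) Y = Y"
proof -
  have "lin (prodop vec vec) Y = lin vec Y"
    by (rule lin_cong) auto
  then show ?thesis by simp
qed

theorem theorem6p1:
  fixes m :: "'b \<Rightarrow> 'b \<Rightarrow> ('b \<Rightarrow>\<^sub>0 'k::field_char_0)"
    and u :: "'b \<Rightarrow>\<^sub>0 'k"
    and cop :: "'b \<Rightarrow> ('b \<times> 'b \<Rightarrow>\<^sub>0 'k)"
    and cou :: "'b \<Rightarrow> 'k"
    and q :: "'k rbq"
    and D :: "'b \<times> 'b list \<Rightarrow> (('b \<times> 'b list) \<times> ('b \<times> 'b list) \<Rightarrow>\<^sub>0 'k)"
    and e :: "'b \<times> 'b list \<Rightarrow> 'k"
  assumes H: "comm_bialgebra m u cop cou"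
    and D_mor: "Rq_morphism (tpmul q m u) (tpunit u) (tpP u)
                  (tensmul (tpmul q m u)) (tens (tpunit u) (tpunit u)) (tensop (tpP u)) D"
    and D_iH: "\<forall>h. lin D (iH h) = lin (tensmap iH iH) (cop h)"
    and e_mor: "Rq_morphism_K q (tpmul q m u) (tpunit u) (tpP u) e"
    and e_iH: "\<forall>h. linK e (iH h) = cou h"
  shows "coassoc D \<and> right_counit D e \<and>
         right_Rq_bialgebra q (tpmul q m u) (tpunit u) (tpP u) D e"
proof -
  have Hf: "\<forall>x y z. bil m (bil m x y) z = bil m x (bil m y z)" "\<forall>x. bil m u x = x \<and> bil m x u = x"
    using H unfolding comm_bialgebra_def mulv_bil by blast+
  interpret Halg m u
    by (unfold_locales; use Hf in blast)
  let ?M = "tpmul q m u"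
  let ?P = "tpP u"
  have Dm: "\<And>x y. lin D (MP q x y) = bil (prodmul ?M ?M) (lin D x) (lin D y)"
    using D_mor by (simp add: Rq_morphism_def mulv_bil tensmul_eq)
  have DP: "\<And>x. lin D (PP x) = lin (prodop ?P vec) (lin D x)"
    using D_mor by (simp add: Rq_morphism_def tensop_eq)
  have em: "\<And>x y. linK e (MP q x y) = linK e x * linK e y"
    using e_mor by (simp add: Rq_morphism_K_def mulv_bil)
  have eP: "\<And>x. linK e (PP x) = scalar_op q * linK e x"
    using e_mor by (simp add: Rq_morphism_K_def)
  have Dh: "\<And>h. D (h, []) = lin (prodop iH iH) (cop h)"
    using D_iH by (simp add: iH_def tensmap_eq)
  have eh: "\<And>h. e (h, []) = cou h"
    using e_iH by (simp add: iH_def)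
  have cop_coassoc: "\<And>h. lin (prodop cop vec) (cop h) = lin ascm (lin (prodop vec cop) (cop h))"
  proof -
    fix h
    have "coassoc cop" using H by (simp add: comm_bialgebra_def)
    then have "lin (\<lambda>(x, y). tens (cop x) (vec y)) (cop h) =
               lin (\<lambda>(x, y). lin (\<lambda>(y1, y2). vec ((x, y1), y2)) (cop y)) (cop h)"
      by (simp add: coassoc_def)
    then show "?thesis h" by (simp add: G2_eq prodop_def)
  qed
  have cop_counit: "\<And>h. lin (\<lambda>(x, y). smul (cou y) (vec x)) (cop h) = vec h"
    using H by (simp add: comm_bialgebra_def right_counit_def)

  define G :: "('b \<times> 'b list) \<times> ('b \<times> 'b list) \<Rightarrow> ('b \<times> 'b list \<Rightarrow>\<^sub>0 'k)"
    where "G = (\<lambda>(x, y). smul (e y) (vec x))"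
  have G_tens: "lin G (tens x y) = smul (linK e y) x" for x y
  proof -
    have 1: "lin G (tens (vec a) y) = smul (linK e y) (vec a)" for a
      by (rule lin_ext[where x=y]) (auto simp: islin_def G_def smul_add_left)
    show ?thesis
      by (rule lin_ext[where x=x]) (auto simp: islin_def 1 mult.commute simp del: tens_vec_vec)
  qed
  have LGD: "lin (\<lambda>w. lin G (D w)) x = lin G (lin D x)" for x
    by (simp add: lin_comp)
  have counit: "right_counit D e"
  proof -
    have "lin G (D w) = vec w" for w
    proof -
      obtain a W where w: "w = (a, W)" by fastforce
      have "(\<lambda>w. lin G (D w)) (a, W) = vec (a, W)"
      proof (rule uniq[where Mt = ?M and Pt = ?P and q = q])
        fix x y
        show "lin (\<lambda>w. lin G (D w)) (MP q x y) = MP q (lin (\<lambda>w. lin G (D w)) x) (lin (\<lambda>w. lin G (D w)) y)"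
        proof -
          have "lin G (bil (prodmul ?M ?M) X Y) = MP q (lin G X) (lin G Y)" for X Y
          proof -
            have 1: "lin G (bil (prodmul ?M ?M) (tens x1 x2) Y) = MP q (lin G (tens x1 x2)) (lin G Y)" for x1 x2
              by (rule lin_ext_tens[where p=Y]) (auto simp: islin_def prodmul_tens G_tens em mult.commute smul_add_left)
            show ?thesis
              by (rule lin_ext_tens[where p=X]) (auto simp: islin_def smul_add_left 1)
          qed
          then show ?thesis by (simp only: LGD Dm)
        qed
      next
        fix x
        show "lin (\<lambda>w. lin G (D w)) (PP x) = lin ?P (lin (\<lambda>w. lin G (D w)) x)"
        proof -
          have "lin G (lin (prodop ?P vec) X) = PP (lin G X)" for X
            by (rule lin_ext_tens[where p=X]) (auto simp: islin_def prodop_tens G_tens smul_add_left)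
          then show ?thesis by (simp only: LGD DP)
        qed
      next
        fix x y show "lin vec (MP q x y) = MP q (lin vec x) (lin vec y)" by simp
      next
        fix x show "lin vec (PP x) = lin ?P (lin vec x)" by simp
      next
        fix h
        have "lin G (D (h, [])) = lin (\<lambda>(x, y). smul (cou y) (iH x)) (cop h)"
          by (simp add: Dh lin_comp) (rule lin_cong, auto simp: G_tens e_iH)
        also have "\<dots> = lin iH (lin (\<lambda>(x, y). smul (cou y) (vec x)) (cop h))"
          by (simp add: lin_comp) (rule lin_cong, auto)
        also have "\<dots> = vec (h, [])"
          by (simp add: cop_counit iH_def)
        finally show "(\<lambda>w. lin G (D w)) (h, []) = vec (h, [])" by simp
      qed
      then show ?thesis using w by simp
    qed
    then show ?thesis by (simp add: right_counit_def G_def)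
  qed

  let ?Mt = "prodmul (prodmul ?M ?M) ?M"
  let ?Pt = "prodop (prodop ?P vec) vec"
  define Lf where "Lf = (\<lambda>w. lin (prodop D vec) (D w))"
  define Rf where "Rf = (\<lambda>w. lin ascm (lin (prodop vec D) (D w)))"
  have LfL: "lin Lf x = lin (prodop D vec) (lin D x)" for x
    by (simp add: Lf_def lin_comp)
  have RfL: "lin Rf x = lin ascm (lin (prodop vec D) (lin D x))" for x
    by (simp add: Rf_def lin_comp)
  have LR: "Lf w = Rf w" for w
  proof -
    obtain a W where w: "w = (a, W)" by fastforce
    have "Lf (a, W) = Rf (a, W)"
    proof (rule uniq[where Mt = ?Mt and Pt = ?Pt and q = q])
      fix x y
      show "lin Lf (MP q x y) = bil ?Mt (lin Lf x) (lin Lf y)"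
        unfolding LfL Dm
        by (rule prodop_mul) (simp_all add: Dm)
    next
      fix x
      have 1: "(\<lambda>a. lin D (?P a)) = (\<lambda>a. lin (prodop ?P vec) (D a))"
        using DP[of "vec a" for a] by (simp add: fun_eq_iff)
      show "lin Lf (PP x) = lin ?Pt (lin Lf x)"
        unfolding LfL DP prodop_comp
        by (simp add: 1)
    next
      fix x y
      have "lin Rf (MP q x y) = lin ascm (lin (prodop vec D) (bil (prodmul ?M ?M) (lin D x) (lin D y)))"
        by (simp only: RfL Dm)
      also have "\<dots> = lin ascm (bil (prodmul ?M (prodmul ?M ?M)) (lin (prodop vec D) (lin D x)) (lin (prodop vec D) (lin D y)))"
        by (rule arg_cong[where f="lin ascm"], rule prodop_mul) (simp_all add: Dm)
      also have "\<dots> = bil ?Mt (lin Rf x) (lin Rf y)"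
        by (simp only: asc_mul RfL)
      finally show "lin Rf (MP q x y) = bil ?Mt (lin Rf x) (lin Rf y)" .
    next
      fix x
      have 2: "lin (prodop ?P D) X = lin (prodop ?P (prodop vec vec)) (lin (prodop vec D) X)" for X
        by (simp add: prodop_comp lin_prodop_vec_vec)
      show "lin Rf (PP x) = lin ?Pt (lin Rf x)"
        unfolding RfL DP prodop_comp
        by (simp add: 2 asc_nat)
    next
      fix h
      have "Lf (h, []) = lin (prodop (prodop iH iH) iH) (lin (prodop cop vec) (cop h))"
        by (simp add: Lf_def Dh prodop_comp iH_def)
      also have "\<dots> = lin (prodop (prodop iH iH) iH) (lin ascm (lin (prodop vec cop) (cop h)))"
        by (simp add: cop_coassoc)
      also have "\<dots> = Rf (h, [])"
        by (simp add: Rf_def Dh prodop_comp asc_nat[symmetric] iH_def)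
      finally show "Lf (h, []) = Rf (h, [])" .
    qed
    then show ?thesis using w by simp
  qed
  have coass: "coassoc D"
    unfolding coassoc_def G2_eq
    using LR by (simp add: Lf_def Rf_def prodop_def)

  have "right_Rq_bialgebra q (tpmul q m u) (tpunit u) (tpP u) D e"
    unfolding right_Rq_bialgebra_def
    using is_Rq_T coass counit D_mor e_mor by blast
  then show ?thesis using coass counit by blast
qed

end
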